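(* For every non-empty open set $U$ of $\mathcal{K}_2$ there exists $N\ge3$ such that $\mathcal{B}_2^\phi(j)\cap U\neq\emptyset$ for all $j\ge N$. In particular, $\mathcal{B}_2^\phi=\bigcup_{j\ge3}\mathcal{B}_2^\phi(j)$ is dense in $\mathcal{K}_2$.
   Context: $\mathcal{K}_2$ is the set of centrally symmetric convex bodies in $\mathbb{R}^2$ (compact convex sets with non-empty interior, symmetric about the origin) with the Hausdorff metric. For a spanning set $a=\{a_1,\dots,a_n\}\subset\mathbb{R}^2$ with $n\ge3$ and $w>\log 2n$ (natural log), let $\phi_{a,w}(x)=\frac{1}{2n}\sum_{i=1}^n\left(e^{w(a_i\cdot x-1)}+e^{w(-a_i\cdot x-1)}\right)$. For $j\ge3$, $\mathcal{B}_2^\phi(j)$ is the set of $C\subset\mathbb{R}^2$ for which there exist a spanning set $a=\{a_1,\dots,a_j\}\subset\mathbb{R}^2$ and $w>\log2j$ with $C=\{x\in\mathbb{R}^2:\phi_{a,w}(x)\le1\}$. *)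

theory Defs
  imports "HOL-Analysis.Analysis"
begin

definition K2 :: "(real^2) set set" where
  "K2 = {C. compact C \<and> convex C \<and> interior C \<noteq> {} \<and> (\<forall>x\<in>C. - x \<in> C)}"

text \<open>Hausdorff distance (used only between non-empty compact sets).\<close>
definition hausdist :: "(real^2) set \<Rightarrow> (real^2) set \<Rightarrow> real" where
  "hausdist C D = max (SUP x\<in>C. infdist x D) (SUP y\<in>D. infdist y C)"

definition openK2 :: "(real^2) set set \<Rightarrow> bool" where
  "openK2 U \<longleftrightarrow> U \<subseteq> K2 \<and>
     (\<forall>C\<in>U. \<exists>e>0. \<forall>D\<in>K2. hausdist C D < e \<longrightarrow> D \<in> U)"

definition phi :: "(real^2) set \<Rightarrow> real \<Rightarrow> real^2 \<Rightarrow> real" where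
  "phi A w x = (1 / (2 * real (card A))) *
     (\<Sum>a\<in>A. exp (w * (a \<bullet> x - 1)) + exp (w * (- (a \<bullet> x) - 1)))"

definition Bphi :: "nat \<Rightarrow> (real^2) set set" where
  "Bphi j = {C. \<exists>A w. finite A \<and> card A = j \<and> span A = UNIV \<and>
                 w > ln (2 * real j) \<and> C = {x. phi A w x \<le> 1}}"

end

theory Submission
  imports Defs
begin

lemma phi_le1_imp:
  assumes "finite A" "card A = j" "j > 0" "w > 0" "phi A w x \<le> 1" "a \<in> A"
  shows "a \<bullet> x \<le> 1 + ln (2 * real j) / w"
proof -
  have "exp (w * (a \<bullet> x - 1)) \<le> exp (w * (a \<bullet> x - 1)) + exp (w * (- (a \<bullet> x) - 1))" by simp
  also have "\<dots> \<le> (\<Sum>b\<in>A. exp (w * (b \<bullet> x - 1)) + exp (w * (- (b \<bullet> x) - 1)))"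
    by (rule member_le_sum[OF assms(6)]) (auto intro: add_nonneg_nonneg simp: assms(1))
  also have "\<dots> \<le> 2 * real j"
    using assms(5) assms(1,2,3) unfolding phi_def by (simp add: field_simps)
  finally have "exp (w * (a \<bullet> x - 1)) \<le> exp (ln (2 * real j))"
    using assms(3) by simp
  then have "w * (a \<bullet> x - 1) \<le> ln (2 * real j)" by (simp only: exp_le_cancel_iff)
  then have "a \<bullet> x - 1 \<le> ln (2 * real j) / w" using assms(4) by (simp add: field_simps mult.commute)
  then show ?thesis by simp
qed

lemma phi_le1_if:
  assumes "finite A" "card A = j" "j > 0" "w \<ge> 0" "\<forall>a\<in>A. \<bar>a \<bullet> x\<bar> \<le> 1"
  shows "phi A w x \<le> 1"
proof -
  have "(\<Sum>b\<in>A. exp (w * (b \<bullet> x - 1)) + exp (w * (- (b \<bullet> x) - 1))) \<le> (\<Sum>b\<in>A. 2)"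
  proof (rule sum_mono)
    fix b assume b: "b \<in> A"
    have "w * (b \<bullet> x - 1) \<le> 0" "w * (- (b \<bullet> x) - 1) \<le> 0"
      using assms(5) b assms(4) by (auto intro!: mult_nonneg_nonpos)
    then show "exp (w * (b \<bullet> x - 1)) + exp (w * (- (b \<bullet> x) - 1)) \<le> 2"
      by (smt (verit) exp_le_one_iff)
  qed
  then show ?thesis using assms(1,2,3) unfolding phi_def by (simp add: field_simps)
qed

lemma phi_neg: "phi A w (- x) = phi A w x"
  unfolding phi_def by (simp add: add.commute)

lemma phi_convex: assumes "w \<ge> 0" shows "convex {x. phi A w x \<le> 1}"
proof (rule convexI)
  fix x y :: "real^2" and u v :: real
  assume x: "x \<in> {x. phi A w x \<le> 1}" and y: "y \<in> {x. phi A w x \<le> 1}"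
    and u: "0 \<le> u" and v: "0 \<le> v" and uv: "u + v = 1"
  let ?g = "\<lambda>z b. exp (w * (b \<bullet> z - 1)) + exp (w * (- (b \<bullet> z) - 1))"
  have e: "exp (u * p + v * q) \<le> u * exp p + v * exp q" for p q
  proof -
    have "u = 1 - v" using uv by simp
    have "v \<le> 1" using uv u by simp
    have "exp ((1 - v) *\<^sub>R p + v *\<^sub>R q) \<le> (1 - v) * exp p + v * exp q"
      using convex_onD[OF exp_convex, of v p q] v \<open>v \<le> 1\<close> by simp
    then show ?thesis using \<open>u = 1 - v\<close> by simp
  qed
  have g: "?g (u *\<^sub>R x + v *\<^sub>R y) b \<le> u * ?g x b + v * ?g y b" for b
  proof -
    have ip: "b \<bullet> (u *\<^sub>R x + v *\<^sub>R y) = u * (b \<bullet> x) + v * (b \<bullet> y)"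
      by (simp add: inner_add_right)
    have v1: "v = 1 - u" using uv by simp
    have 1: "w * (b \<bullet> (u *\<^sub>R x + v *\<^sub>R y) - 1) = u * (w * (b \<bullet> x - 1)) + v * (w * (b \<bullet> y - 1))"
      unfolding ip v1 by (simp add: algebra_simps)
    have 2: "w * (- (b \<bullet> (u *\<^sub>R x + v *\<^sub>R y)) - 1) = u * (w * (- (b \<bullet> x) - 1)) + v * (w * (- (b \<bullet> y) - 1))"
      unfolding ip v1 by (simp add: algebra_simps)
    show ?thesis unfolding 1 2 using e[of "w * (b \<bullet> x - 1)" "w * (b \<bullet> y - 1)"]
        e[of "w * (- (b \<bullet> x) - 1)" "w * (- (b \<bullet> y) - 1)"] by (simp add: algebra_simps)
  qed
  have eqS: "(\<Sum>b\<in>A. u * ?g x b + v * ?g y b) = u * (\<Sum>b\<in>A. ?g x b) + v * (\<Sum>b\<in>A. ?g y b)"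
    by (simp add: sum.distrib sum_distrib_left distrib_left)
  have S: "(\<Sum>b\<in>A. ?g (u *\<^sub>R x + v *\<^sub>R y) b) \<le> u * (\<Sum>b\<in>A. ?g x b) + v * (\<Sum>b\<in>A. ?g y b)"
    using sum_mono[of A "?g (u *\<^sub>R x + v *\<^sub>R y)" "\<lambda>b. u * ?g x b + v * ?g y b", OF g]
    unfolding eqS[symmetric] by simp
  have c: "0 \<le> 1 / (2 * real (card A))" by simp
  have "phi A w (u *\<^sub>R x + v *\<^sub>R y) \<le> u * phi A w x + v * phi A w y"
    unfolding phi_def using mult_left_mono[OF S c] by (simp add: algebra_simps)
  also have "\<dots> \<le> u * 1 + v * 1" using x y u v by (intro add_mono mult_left_mono) auto
  finally show "u *\<^sub>R x + v *\<^sub>R y \<in> {x. phi A w x \<le> 1}" using uv by simp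
qed

lemma phi_closed: "closed {x. phi A w x \<le> 1}"
  unfolding phi_def by (intro closed_Collect_le continuous_intros)


lemma K2_ball0:
  assumes "C \<in> K2" shows "\<exists>r>0. ball 0 r \<subseteq> C"
proof -
  have cv: "convex C" and sym: "\<forall>x\<in>C. - x \<in> C" and int: "interior C \<noteq> {}"
    using assms unfolding K2_def by auto
  obtain x where "x \<in> interior C" using int by auto
  then obtain r where r: "r > 0" "ball x r \<subseteq> C" using mem_interior by blast
  have "ball 0 r \<subseteq> C"
  proof
    fix z :: "real^2" assume z: "z \<in> ball 0 r"
    have "x + z \<in> C" using r z by (auto simp: dist_norm)
    moreover have "x - z \<in> C" using r z by (auto simp: dist_norm)
    then have "- (x - z) \<in> C" using sym by blast
    ultimately have "(1/2) *\<^sub>R (x + z) + (1/2) *\<^sub>R (- (x - z)) \<in> C"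
      by (intro convexD[OF cv]) auto
    moreover have "(1/2) *\<^sub>R (x + z) + (1/2) *\<^sub>R (- (x - z)) = z"
      by (simp add: vec_eq_iff algebra_simps)
    ultimately show "z \<in> C" by simp
  qed
  then show ?thesis using r by blast
qed

lemma hausdist_le:
  assumes "C \<noteq> {}" "C \<subseteq> D" "\<forall>y\<in>D. infdist y C \<le> M" "0 \<le> M"
  shows "hausdist C D \<le> M"
proof -
  have "D \<noteq> {}" using assms by auto
  have 1: "(SUP x\<in>C. infdist x D) \<le> M"
  proof (rule cSUP_least[OF assms(1)])
    fix x assume "x \<in> C"
    then have "infdist x D = 0" using assms(2) by (simp add: infdist_zero subsetD)
    then show "infdist x D \<le> M" using assms(4) by simp
  qed
  have 2: "(SUP y\<in>D. infdist y C) \<le> M"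
    by (rule cSUP_least[OF \<open>D \<noteq> {}\<close>]) (use assms(3) in auto)
  show ?thesis unfolding hausdist_def using 1 2 by simp
qed

lemma aux_div: "(q::real) < \<beta> \<Longrightarrow> \<beta> < 0 \<Longrightarrow> 1 < q / \<beta>"
  by (simp add: less_divide_eq_1)

lemma main_approx:
  assumes CK: "C \<in> K2" and e: "e > 0"
  shows "\<exists>N\<ge>3. \<forall>j\<ge>N. \<exists>D\<in>Bphi j. D \<in> K2 \<and> hausdist C D < e"
proof -
  have cpt: "compact C" and cv: "convex C" and sym: "\<forall>x\<in>C. - x \<in> C" and int: "interior C \<noteq> {}"
    using CK unfolding K2_def by auto
  obtain r where r: "r > 0" "ball 0 r \<subseteq> C" using K2_ball0[OF CK] by blast
  have C0: "0 \<in> C" using r by auto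
  obtain R where R: "R > 0" "\<forall>x\<in>C. norm x \<le> R"
    using compact_imp_bounded[OF cpt] unfolding bounded_pos by blast
  define P where "P = {b::real^2. \<forall>y\<in>C. b \<bullet> y \<le> 1}"
  have P_eq: "P = (\<Inter>y\<in>C. {b. inner y b \<le> 1})" unfolding P_def by (auto simp: inner_commute)
  have P_closed: "closed P" unfolding P_eq by (intro closed_INT) (simp add: closed_halfspace_le)
  have P_bdd: "norm b \<le> 2 / r" if "b \<in> P" for b
  proof (cases "b = 0")
    case True then show ?thesis using r by simp
  next
    case False
    define y where "y = (r / 2 / norm b) *\<^sub>R b"
    have "norm y = r / 2" using False r unfolding y_def by simp
    then have "y \<in> C" using r by auto
    then have "b \<bullet> y \<le> 1" using that unfolding P_def by auto
    moreover have "b \<bullet> y = r / 2 * norm b"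
      using False unfolding y_def by (simp add: power2_norm_eq_inner[symmetric] power2_eq_square)
    ultimately have "r / 2 * norm b \<le> 1" by simp
    then show ?thesis using r by (simp add: field_simps)
  qed
  have P_cpt: "compact P" using P_closed P_bdd
    by (metis bounded_iff compact_eq_bounded_closed)
  have small: "b \<in> P" if "norm b \<le> 1 / R" for b
    unfolding P_def
  proof (intro CollectI ballI)
    fix y assume "y \<in> C"
    have "b \<bullet> y \<le> norm b * norm y" by (rule norm_cauchy_schwarz)
    also have "\<dots> \<le> (1 / R) * R"
      using that R \<open>y \<in> C\<close> by (intro mult_mono) auto
    finally show "b \<bullet> y \<le> 1" using R by simp
  qed
  define \<eta> where "\<eta> = min 1 (e / (4 * R))"
  have \<eta>: "\<eta> > 0" "\<eta> \<le> 1" "\<eta> \<le> e / (4 * R)" using e R unfolding \<eta>_def by auto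
  define \<delta> where "\<delta> = \<eta> / (2 * R)"
  have \<delta>: "\<delta> > 0" "\<delta> \<le> 1 / (2 * R)" "2 * R * \<delta> = \<eta>"
    using \<eta> R unfolding \<delta>_def by (auto simp: field_simps)
  have "P \<subseteq> (\<Union>b\<in>P. ball b \<delta>)" using \<delta> by auto
  then obtain F where F: "F \<subseteq> P" "finite F" "P \<subseteq> (\<Union>b\<in>F. ball b \<delta>)"
    using compactE_image[OF P_cpt, of P "\<lambda>b. ball b \<delta>"] by blast
  define Bs where "Bs = (\<lambda>i. (1 / R) *\<^sub>R i) ` (Basis :: (real^2) set)"
  have Bs_P: "Bs \<subseteq> P" unfolding Bs_def using R by (auto intro!: small)
  define F' where "F' = F \<union> Bs"
  have F': "finite F'" "F' \<subseteq> P" using F Bs_P unfolding F'_def Bs_def by auto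
  have inf_cb: "infinite (cball (0::real^2) (1 / R))"
  proof -
    have "\<forall>\<epsilon>>0. infinite (UNIV \<inter> cball (0::real^2) \<epsilon>)"
      using islimpt_eq_infinite_cball[of "0::real^2" UNIV] islimpt_UNIV[of "0::real^2"] by blast
    then show ?thesis using R by simp
  qed
  have "cball 0 (1 / R) \<subseteq> P" using small by auto
  then have infP: "infinite (P - F')" using inf_cb F'(1)
    by (metis Diff_infinite_finite infinite_super)
  define N where "N = card F' + 3"
  show ?thesis
  proof (intro exI[of _ N] conjI allI impI)
    show "3 \<le> N" unfolding N_def by simp
    fix j assume j: "N \<le> j"
    then have j3: "j \<ge> 3" unfolding N_def by simp
    obtain B where B: "finite B" "card B = j - card F'" "B \<subseteq> P - F'"
      using infinite_arbitrarily_large[OF infP] by blast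
    define A where "A = F' \<union> B"
    have A_fin: "finite A" using B F' unfolding A_def by auto
    have A_card: "card A = j" unfolding A_def using B F' j unfolding N_def
      by (subst card_Un_disjoint) auto
    have A_P: "A \<subseteq> P" using B F' unfolding A_def by auto
    have FA: "F \<subseteq> A" unfolding A_def F'_def by auto
    have "Basis \<subseteq> span A"
    proof
      fix i :: "real^2" assume i: "i \<in> Basis"
      have "(1 / R) *\<^sub>R i \<in> A" using i unfolding A_def F'_def Bs_def by auto
      then have "R *\<^sub>R ((1 / R) *\<^sub>R i) \<in> span A" by (intro span_mul span_base)
      then show "i \<in> span A" using R by simp
    qed
    then have "span (Basis :: (real^2) set) \<subseteq> span A" by (metis span_mono span_span)
    then have A_span: "span A = UNIV" by auto
    have lnpos: "ln (2 * real j) > 0" using j3 by simp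
    define w where "w = ln (2 * real j) / \<eta> + 1"
    have "ln (2 * real j) \<le> ln (2 * real j) / \<eta>" using \<eta> lnpos by (simp add: field_simps)
    then have w_gt: "w > ln (2 * real j)" unfolding w_def by simp
    have w_pos: "w > 0" using w_gt lnpos by simp
    define s where "s = 1 + ln (2 * real j) / w"
    have "ln (2 * real j) \<le> \<eta> * w" unfolding w_def using \<eta> by (simp add: field_simps)
    then have s_le: "s \<le> 1 + \<eta>" unfolding s_def using w_pos by (simp add: field_simps)
    have s_ge: "s \<ge> 1" unfolding s_def using w_pos lnpos by simp
    define D where "D = {x. phi A w x \<le> 1}"
    have D_B: "D \<in> Bphi j" unfolding Bphi_def D_def using A_fin A_card A_span w_gt by blast
    have CD: "C \<subseteq> D"
    proof
      fix x assume x: "x \<in> C"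
      have "\<forall>a\<in>A. \<bar>a \<bullet> x\<bar> \<le> 1"
      proof
        fix a assume "a \<in> A"
        then have "a \<in> P" using A_P by auto
        then have "a \<bullet> x \<le> 1" "a \<bullet> (- x) \<le> 1" using x sym unfolding P_def by blast+
        then show "\<bar>a \<bullet> x\<bar> \<le> 1" by simp
      qed
      then show "x \<in> D" unfolding D_def using phi_le1_if[OF A_fin A_card] j3 w_pos by simp
    qed
    define t where "t = s * (1 + 2 * R * \<delta>)"
    have t_eq: "t = s * (1 + \<eta>)" unfolding t_def \<delta>(3) ..
    have t_ge: "t \<ge> 1" using mult_mono[of 1 s 1 "1 + \<eta>"] s_ge \<eta> unfolding t_eq by simp
    have t_pos: "t > 0" using t_ge by simp
    have t_le: "t - 1 \<le> 3 * \<eta>"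
    proof -
      have "t \<le> (1 + \<eta>) * (1 + \<eta>)" unfolding t_eq using s_le \<eta> by (intro mult_right_mono) auto
      moreover have "(1 + \<eta>) * (1 + \<eta>) = 1 + 2 * \<eta> + \<eta> * \<eta>" by (simp add: algebra_simps)
      moreover have "\<eta> * \<eta> \<le> \<eta>" using \<eta> by (intro mult_left_le_one_le) auto
      ultimately show ?thesis by linarith
    qed
    have Dprop: "norm x \<le> 2 * R * s \<and> (\<exists>c\<in>C. x = t *\<^sub>R c)" if x: "x \<in> D" for x
    proof -
      have ax: "a \<bullet> x \<le> s" if "a \<in> A" for a
        using phi_le1_imp[OF A_fin A_card _ w_pos _ that] x j3 unfolding D_def s_def by simp
      have bx: "b \<bullet> x \<le> s + \<delta> * norm x" if bP: "b \<in> P" for b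
      proof -
        obtain f where f: "f \<in> F" "b \<in> ball f \<delta>" using F(3) bP by blast
        have 1: "b \<bullet> x = f \<bullet> x + (b - f) \<bullet> x" by (simp add: inner_diff_left)
        have 2: "(b - f) \<bullet> x \<le> norm (b - f) * norm x" by (rule norm_cauchy_schwarz)
        have 3: "norm (b - f) * norm x \<le> \<delta> * norm x"
          using f(2) by (intro mult_right_mono) (auto simp: dist_norm norm_minus_commute)
        have 4: "f \<bullet> x \<le> s" using ax[of f] f(1) FA by auto
        show ?thesis using 1 2 3 4 by linarith
      qed
      have nx: "norm x \<le> 2 * R * s"
      proof (cases "x = 0")
        case True then show ?thesis using R s_ge by simp
      next
        case False
        define b0 where "b0 = (1 / (R * norm x)) *\<^sub>R x"
        have "norm b0 = 1 / R" unfolding b0_def using False R by simp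
        then have "b0 \<in> P" by (intro small) simp
        then have "b0 \<bullet> x \<le> s + \<delta> * norm x" by (rule bx)
        moreover have "b0 \<bullet> x = norm x / R"
          unfolding b0_def using False R by (simp add: power2_norm_eq_inner[symmetric] power2_eq_square)
        ultimately have "norm x / R \<le> s + \<delta> * norm x" by simp
        moreover have "\<delta> * norm x \<le> norm x / (2 * R)"
          using mult_right_mono[OF \<delta>(2) norm_ge_zero[of x]] by simp
        ultimately have "norm x / R \<le> s + norm x / (2 * R)" by simp
        then show ?thesis using R by (simp add: field_simps)
      qed
      have bt: "b \<bullet> x \<le> t" if "b \<in> P" for b
      proof -
        have "b \<bullet> x \<le> s + \<delta> * norm x" using bx that .
        also have "\<delta> * norm x \<le> \<delta> * (2 * R * s)" using nx \<delta> by (intro mult_left_mono) auto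
        finally show ?thesis unfolding t_def by (simp add: algebra_simps)
      qed
      have "(1 / t) *\<^sub>R x \<in> C"
      proof (rule ccontr)
        assume z: "(1 / t) *\<^sub>R x \<notin> C"
        obtain a \<beta> where a: "a \<bullet> ((1 / t) *\<^sub>R x) < \<beta>" "\<forall>y\<in>C. \<beta> < a \<bullet> y"
          using separating_hyperplane_closed_point[OF cv compact_imp_closed[OF cpt] z] by blast
        have \<beta>: "\<beta> < 0" using a(2) C0 by auto
        define b where "b = (1 / \<beta>) *\<^sub>R a"
        have "b \<in> P" unfolding P_def
        proof (intro CollectI ballI)
          fix y assume "y \<in> C"
          then have "\<beta> < a \<bullet> y" using a(2) by auto
          then have "(a \<bullet> y) / \<beta> < 1" using \<beta> by (simp add: divide_less_eq_1)
          then show "b \<bullet> y \<le> 1" unfolding b_def by simp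
        qed
        then have bt1: "b \<bullet> x \<le> t" by (rule bt)
        have "(a \<bullet> x) / t < \<beta>" using a(1) by simp
        then have "(a \<bullet> x) / t / \<beta> > 1" using \<beta> by (rule aux_div)
        moreover have "(a \<bullet> x) / t / \<beta> = (b \<bullet> x) / t" unfolding b_def by simp
        ultimately have "b \<bullet> x / t > 1" by simp
        then have "b \<bullet> x > t" using t_pos by (simp add: less_divide_eq_1)
        then show False using bt1 by simp
      qed
      moreover have "x = t *\<^sub>R ((1 / t) *\<^sub>R x)" using t_pos by simp
      ultimately show ?thesis using nx by blast
    qed
    have hd: "hausdist C D \<le> (t - 1) * R"
    proof (rule hausdist_le)
      show "C \<noteq> {}" using C0 by auto
      show "C \<subseteq> D" by (rule CD)
      show "0 \<le> (t - 1) * R" using t_ge R by simp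
      show "\<forall>y\<in>D. infdist y C \<le> (t - 1) * R"
      proof
        fix y assume "y \<in> D"
        then obtain c where c: "c \<in> C" "y = t *\<^sub>R c" using Dprop by blast
        have "infdist y C \<le> dist y c" by (rule infdist_le[OF c(1)])
        also have "dist y c = (t - 1) * norm c"
        proof -
          have "t *\<^sub>R c - c = (t - 1) *\<^sub>R c" by (simp add: algebra_simps)
          then show ?thesis unfolding c(2) dist_norm using t_ge by simp
        qed
        also have "\<dots> \<le> (t - 1) * R" using c(1) R t_ge by (intro mult_left_mono) auto
        finally show "infdist y C \<le> (t - 1) * R" .
      qed
    qed
    also have "(t - 1) * R \<le> 3 * \<eta> * R" using t_le R by (intro mult_right_mono) auto
    also have "3 * \<eta> * R \<le> 3 * (e / (4 * R)) * R" using \<eta> R by (intro mult_right_mono) auto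
    also have "\<dots> < e" using R e by (simp add: field_simps)
    finally have hd2: "hausdist C D < e" .
    have "D \<in> K2"
      unfolding K2_def
    proof (intro CollectI conjI ballI)
      have "2 * R * s > 0" using R s_ge by simp
      then have "bounded D" unfolding bounded_pos using Dprop
        by (intro exI[of _ "2 * R * s"]) auto
      then show "compact D" using phi_closed unfolding D_def compact_eq_bounded_closed by blast
      show "convex D" unfolding D_def using phi_convex w_pos by simp
      show "interior D \<noteq> {}" using interior_mono[OF CD] int by blast
      fix x assume "x \<in> D" then show "- x \<in> D" unfolding D_def by (simp add: phi_neg)
    qed
    then show "\<exists>D\<in>Bphi j. D \<in> K2 \<and> hausdist C D < e" using D_B hd2 by blast
  qed
qed

theorem proposition4p13:
  shows "(\<forall>U. openK2 U \<and> U \<noteq> {} \<longrightarrow>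
            (\<exists>N\<ge>3. \<forall>j\<ge>N. Bphi j \<inter> U \<noteq> {}))
       \<and> (\<forall>C\<in>K2. \<forall>e>0. \<exists>D\<in>(\<Union>j\<in>{3..}. Bphi j). hausdist C D < e)"
proof (intro conjI allI impI ballI)
  fix U assume U: "openK2 U \<and> U \<noteq> {}"
  then obtain C where C: "C \<in> U" by auto
  then have CK: "C \<in> K2" using U unfolding openK2_def by auto
  obtain e where e: "e > 0" "\<forall>D\<in>K2. hausdist C D < e \<longrightarrow> D \<in> U"
    using U C unfolding openK2_def by blast
  obtain N where N: "N \<ge> 3" "\<forall>j\<ge>N. \<exists>D\<in>Bphi j. D \<in> K2 \<and> hausdist C D < e"
    using main_approx[OF CK e(1)] by blast
  show "\<exists>N\<ge>3. \<forall>j\<ge>N. Bphi j \<inter> U \<noteq> {}"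
    using N e(2) by blast
next
  fix C e assume CK: "C \<in> K2" and e: "(e::real) > 0"
  obtain N where N: "N \<ge> 3" "\<forall>j\<ge>N. \<exists>D\<in>Bphi j. D \<in> K2 \<and> hausdist C D < e"
    using main_approx[OF CK e] by blast
  then obtain D where "D \<in> Bphi N" "hausdist C D < e" by blast
  then show "\<exists>D\<in>(\<Union>j\<in>{3..}. Bphi j). hausdist C D < e" using N(1) by blast
qed

end
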